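(* Let $G$ be the graph defined in the context. For every pair $\{x,y\}$ of distinct vertices of $G$ that are not adjacent in $G$, the graph obtained from $G$ by adding the edge $xy$ contains an induced subgraph isomorphic to $P_6$.
   Context: $P_n$ denotes the path on $n$ vertices. Let $\mathbb{F}=\mathbb{F}_2[\alpha]/(\alpha^4+\alpha+1)$ be the field with 16 elements. Let $S=\{x^3: x\in\mathbb{F}^\times\}=\{1,\alpha^3,\alpha^2+\alpha^3,\alpha+\alpha^3,1+\alpha+\alpha^2+\alpha^3\}$ be the set of nonzero cubes. Let $G$ be the graph with vertex set $\mathbb{F}$ in which distinct $x,y$ are adjacent if and only if $x-y\in S$. *)

theory Defs
  imports "HOL-Library.Z2" "HOL-Computational_Algebra.Polynomial"
begin

text \<open>The field F_16 = F_2[alpha]/(alpha^4+alpha+1), realised as the set of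
  polynomials over F_2 of degree < 4 (reduced representatives), with
  multiplication taken modulo the modulus; addition/subtraction are those of
  polynomials (no reduction needed).\<close>

definition f16_modulus :: "bit poly" where
  "f16_modulus = [:1, 1, 0, 0, 1:]"

definition F16 :: "bit poly set" where
  "F16 = {p. degree p < 4}"

definition f16_mult :: "bit poly \<Rightarrow> bit poly \<Rightarrow> bit poly" where
  "f16_mult p q = (p * q) mod f16_modulus"

definition f16_cubes :: "bit poly set" where
  "f16_cubes = {f16_mult (f16_mult x x) x | x. x \<in> F16 \<and> x \<noteq> 0}"

definition G_adj :: "bit poly \<Rightarrow> bit poly \<Rightarrow> bool" where
  "G_adj x y \<longleftrightarrow> x \<noteq> y \<and> x - y \<in> f16_cubes"

definition add_edge :: "('a \<Rightarrow> 'a \<Rightarrow> bool) \<Rightarrow> 'a \<Rightarrow> 'a \<Rightarrow> 'a \<Rightarrow> 'a \<Rightarrow> bool" where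
  "add_edge E a b u v \<longleftrightarrow> E u v \<or> (u = a \<and> v = b) \<or> (u = b \<and> v = a)"

definition has_induced_path :: "'a set \<Rightarrow> ('a \<Rightarrow> 'a \<Rightarrow> bool) \<Rightarrow> nat \<Rightarrow> bool" where
  "has_induced_path V E n \<longleftrightarrow>
     (\<exists>f. inj_on f {..<n} \<and> f ` {..<n} \<subseteq> V \<and>
          (\<forall>i<n. \<forall>j<n. E (f i) (f j) \<longleftrightarrow> (i = j + 1 \<or> j = i + 1)))"

end

theory Submission
  imports Defs
begin

definition L16 :: "bit poly list" where
  "L16 = [[:0,0,0,0:],[:1,0,0,0:],[:0,1,0,0:],[:1,1,0,0:],[:0,0,1,0:],[:1,0,1,0:],[:0,1,1,0:],[:1,1,1,0:],[:0,0,0,1:],[:1,0,0,1:],[:0,1,0,1:],[:1,1,0,1:],[:0,0,1,1:],[:1,0,1,1:],[:0,1,1,1:],[:1,1,1,1:]]"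

definition Sc :: "bit poly list" where
  "Sc = [[:1,0,0,0:],[:0,0,0,1:],[:0,0,1,1:],[:0,1,0,1:],[:1,1,1,1:]]"

definition wtab :: "(bit poly \<times> bit poly list) list" where
  "wtab = [([:0,1,0,0:], [[:0,0,0,0:],[:0,1,0,0:],[:1,1,0,0:],[:1,0,0,1:],[:1,0,1,0:],[:0,0,1,0:]]),([:1,1,0,0:], [[:0,0,0,0:],[:1,1,0,0:],[:0,1,0,0:],[:1,0,1,1:],[:1,0,1,0:],[:0,0,1,0:]]),([:0,0,1,0:], [[:0,0,0,0:],[:0,0,1,0:],[:1,0,1,0:],[:1,0,0,1:],[:1,1,0,0:],[:0,1,0,0:]]),([:1,0,1,0:], [[:0,0,0,0:],[:1,0,1,0:],[:0,0,1,0:],[:1,1,0,1:],[:1,1,0,0:],[:0,1,0,0:]]),([:0,1,1,0:], [[:0,0,0,0:],[:0,1,1,0:],[:1,1,1,0:],[:1,1,0,1:],[:1,1,0,0:],[:0,1,0,0:]]),([:1,1,1,0:], [[:0,0,0,0:],[:1,1,1,0:],[:0,1,1,0:],[:1,0,0,1:],[:1,1,0,0:],[:0,1,0,0:]]),([:1,0,0,1:], [[:0,0,0,0:],[:1,0,0,1:],[:1,1,0,0:],[:0,1,0,0:],[:1,0,1,1:],[:1,1,1,0:]]),([:1,1,0,1:], [[:0,0,0,0:],[:1,1,0,1:],[:1,1,0,0:],[:0,1,0,0:],[:1,0,1,1:],[:1,0,1,0:]]),([:1,0,1,1:], [[:0,0,0,0:],[:1,0,1,1:],[:0,1,0,0:],[:1,1,0,0:],[:1,0,0,1:],[:0,1,1,0:]]),([:0,1,1,1:],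 [[:0,0,0,0:],[:0,1,1,1:],[:0,1,0,0:],[:1,1,0,0:],[:1,0,0,1:],[:1,0,1,0:]])]"

definition wit :: "bit poly \<Rightarrow> bit poly \<Rightarrow> bit poly list" where
  "wit x y = map (\<lambda>v. v + x) (case map_of wtab (y - x) of Some l \<Rightarrow> l | None \<Rightarrow> [])"

definition adj :: "bit poly \<Rightarrow> bit poly \<Rightarrow> bool" where
  "adj x y \<longleftrightarrow> x \<noteq> y \<and> x - y \<in> set Sc"

definition pathok :: "(bit poly \<Rightarrow> bit poly \<Rightarrow> bool) \<Rightarrow> bit poly list \<Rightarrow> bool" where
  "pathok E l \<longleftrightarrow> length l = 6 \<and> distinct l \<and> set l \<subseteq> set L16 \<and>
     list_all (\<lambda>i. list_all (\<lambda>j. E (l!i) (l!j) = (i = j + 1 \<or> j = i + 1)) [0..<6]) [0..<6]"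

lemma bit_cases2: "(b::bit) = 0 \<or> b = 1"
  by (cases b) auto

lemma deg4: "degree (p::bit poly) < 4 \<Longrightarrow> p = [:coeff p 0, coeff p 1, coeff p 2, coeff p 3:]"
proof (rule poly_eqI)
  fix n assume "degree p < 4"
  then show "coeff p n = coeff [:coeff p 0, coeff p 1, coeff p 2, coeff p 3:] n"
    by (cases n; cases "n - 1"; cases "n - 2"; cases "n - 3")
       (auto simp: coeff_pCons coeff_eq_0 numeral_2_eq_2 numeral_3_eq_3 split: nat.splits)
qed

lemma L16_mem: "[:a, b, c, d:] \<in> set L16"
  by (cases a; cases b; cases c; cases d) (simp_all add: L16_def)

lemma F16_eq: "F16 = set L16"
proof
  show "F16 \<subseteq> set L16"
  proof
    fix p assume "p \<in> F16"
    then have "degree p < 4" by (simp add: F16_def)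
    then have e: "p = [:coeff p 0, coeff p 1, coeff p 2, coeff p 3:]" by (rule deg4)
    show "p \<in> set L16"
      using L16_mem[of "coeff p 0" "coeff p 1" "coeff p 2" "coeff p 3"] e by metis
  qed
next
  show "set L16 \<subseteq> F16"
    by (simp add: L16_def F16_def)
qed

lemma cubes_eq: "f16_cubes = set Sc"
proof -
  have "f16_cubes = (\<lambda>x. f16_mult (f16_mult x x) x) ` (set L16 - {0})"
    unfolding f16_cubes_def F16_eq by auto
  also have "\<dots> = set Sc"
    unfolding f16_mult_def f16_modulus_def L16_def Sc_def by code_simp
  finally show ?thesis .
qed

lemma G_adj_eq: "G_adj = adj"
  by (intro ext) (simp add: G_adj_def adj_def cubes_eq)

lemma pathok_imp: "pathok E l \<Longrightarrow> has_induced_path (set L16) E 6"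
  unfolding pathok_def has_induced_path_def
proof (elim conjE)
  assume h: "length l = 6" "distinct l" "set l \<subseteq> set L16"
    "list_all (\<lambda>i. list_all (\<lambda>j. E (l!i) (l!j) = (i = j + 1 \<or> j = i + 1)) [0..<6]) [0..<6]"
  show "\<exists>f. inj_on f {..<6::nat} \<and> f ` {..<6} \<subseteq> set L16 \<and>
          (\<forall>i<6. \<forall>j<6. E (f i) (f j) = (i = j + 1 \<or> j = i + 1))"
  proof (intro exI[of _ "nth l"] conjI)
    show "inj_on (nth l) {..<6}" using h(1,2) by (simp add: inj_on_def nth_eq_iff_index_eq)
    show "nth l ` {..<6} \<subseteq> set L16" using h(1,3) by auto
    show "\<forall>i<6. \<forall>j<6. E (l!i) (l!j) = (i = j + 1 \<or> j = i + 1)"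
      using h(4) by (simp add: list_all_iff)
  qed
qed

lemma small_check:
  "list_all (\<lambda>y. 0 \<noteq> y \<and> \<not> adj 0 y \<longrightarrow> pathok (add_edge adj 0 y) (wit 0 y)) L16"
  unfolding L16_def wit_def wtab_def by code_simp

lemma add_edge_tr: "add_edge adj x y (u + x) (v + x) = add_edge adj 0 (y - x) u v"
  unfolding add_edge_def adj_def by (auto simp: algebra_simps)

lemma diff_in_F16: "x \<in> F16 \<Longrightarrow> y \<in> F16 \<Longrightarrow> y - x \<in> F16"
  unfolding F16_def using degree_diff_le_max[of y x] by auto

lemma transfer:
  assumes "x \<in> F16" "has_induced_path F16 (add_edge adj 0 (y - x)) 6"
  shows "has_induced_path F16 (add_edge adj x y) 6"
proof -
  obtain f where f: "inj_on f {..<6::nat}" "f ` {..<6} \<subseteq> F16"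
    "\<forall>i<6. \<forall>j<6. add_edge adj 0 (y - x) (f i) (f j) = (i = j + 1 \<or> j = i + 1)"
    using assms(2) unfolding has_induced_path_def by blast
  show ?thesis unfolding has_induced_path_def
  proof (intro exI[of _ "\<lambda>i. f i + x"] conjI)
    show "inj_on (\<lambda>i. f i + x) {..<6}" using f(1) by (auto simp: inj_on_def)
    show "(\<lambda>i. f i + x) ` {..<6} \<subseteq> F16"
    proof
      fix z assume "z \<in> (\<lambda>i. f i + x) ` {..<6}"
      then obtain i where "i < 6" "z = f i + x" by auto
      then have "f i \<in> F16" using f(2) by auto
      then show "z \<in> F16" using assms(1) \<open>z = f i + x\<close>
        unfolding F16_def using degree_add_le_max[of "f i" x] by auto
    qed
    show "\<forall>i<6. \<forall>j<6. add_edge adj x y (f i + x) (f j + x) = (i = j + 1 \<or> j = i + 1)"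
      using f(3) by (simp add: add_edge_tr)
  qed
qed

theorem claim2:
  shows "\<forall>x\<in>F16. \<forall>y\<in>F16. x \<noteq> y \<and> \<not> G_adj x y \<longrightarrow>
           has_induced_path F16 (add_edge G_adj x y) 6"
proof (intro ballI impI)
  fix x y assume xy: "x \<in> F16" "y \<in> F16" "x \<noteq> y \<and> \<not> G_adj x y"
  have d: "y - x \<in> set L16" using diff_in_F16[OF xy(1,2)] F16_eq by simp
  have "0 \<noteq> y - x" using xy(3) by (metis right_minus_eq)
  moreover have "\<not> adj 0 (y - x)" using xy(3) unfolding G_adj_eq adj_def by auto
  ultimately have "pathok (add_edge adj 0 (y - x)) (wit 0 (y - x))"
    using small_check d by (auto simp: list_all_iff)
  then have "has_induced_path F16 (add_edge adj 0 (y - x)) 6"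
    using pathok_imp F16_eq by simp
  then show "has_induced_path F16 (add_edge G_adj x y) 6"
    using transfer xy(1) G_adj_eq by simp
qed

end
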